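(* There exists a recursive coloring function $c_0:\mathbb{N}\rightarrow \{0,1\}^2$ such that for every infinite set $A\subseteq\mathbb{Z}^+$ that does not have weak apartness, $FS^{\leq 2}(A)$ is not monochromatic under $c_0$ (i.e. $A$ is not a solution to $c_0$ for $\mathrm{HT}^{\leq 2}$).
   Context: For $x=\sum_{i=0}^{k}2^{n_i}\in\mathbb{Z}^+$ with $n_0<\cdots<n_k$, set $\mu(x)=n_k$ and $\lambda(x)=n_0$. For each $n$, $B^n=\{x\in\mathbb{Z}^+:\mu(x)=n\}$. A set $A$ has weak apartness if for every natural number $m$, $B^m\cap A$ has at most one element, and for every natural number $l$, there are at most two $x\in A$ with $\lambda(x)=l$. $FS^{\leq 2}(A)=\{\sum_{x\in F}x: F\subseteq A,\ F\text{ nonempty},\ |F|\leq 2\}$. *)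

theory Defs
  imports Main
begin

fun PR :: "(nat list \<Rightarrow> nat) \<Rightarrow> (nat list \<Rightarrow> nat) \<Rightarrow> nat list \<Rightarrow> nat" where
  "PR g h [] = 0"
| "PR g h (0 # xs) = g xs"
| "PR g h (Suc y # xs) = h (PR g h (y # xs) # y # xs)"

inductive recfn :: "nat \<Rightarrow> (nat list \<Rightarrow> nat) \<Rightarrow> bool" where
  zero: "recfn n (\<lambda>_. 0)"
| succ: "recfn 1 (\<lambda>xs. Suc (hd xs))"
| proj: "i < n \<Longrightarrow> recfn n (\<lambda>xs. xs ! i)"
| comp: "recfn m f \<Longrightarrow> length gs = m \<Longrightarrow> (\<forall>g\<in>set gs. recfn n g)
          \<Longrightarrow> recfn n (\<lambda>xs. f (map (\<lambda>g. g xs) gs))"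
| prim: "recfn n g \<Longrightarrow> recfn (Suc (Suc n)) h \<Longrightarrow> recfn (Suc n) (PR g h)"
| mu: "recfn (Suc n) g \<Longrightarrow> (\<forall>xs. length xs = n \<longrightarrow> (\<exists>y. g (y # xs) = 0))
          \<Longrightarrow> recfn n (\<lambda>xs. LEAST y. g (y # xs) = 0)"

definition computable :: "(nat \<Rightarrow> nat) \<Rightarrow> bool" where
  "computable c \<longleftrightarrow> (\<exists>f. recfn 1 f \<and> (\<forall>x. c x = f [x]))"

text \<open>Colours in {0,1}^2 are pairs of booleans, coded as numbers 0..3 for computability.\<close>
definition code2 :: "bool \<times> bool \<Rightarrow> nat" where
  "code2 p = 2 * of_bool (fst p) + of_bool (snd p)"

definition recursive_coloring :: "(nat \<Rightarrow> bool \<times> bool) \<Rightarrow> bool" where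
  "recursive_coloring c \<longleftrightarrow> computable (\<lambda>x. code2 (c x))"

text \<open>For x = sum of 2^(n_i), n_0<...<n_k: mu x = n_k, lambda x = n_0 (x > 0).\<close>
definition bmu :: "nat \<Rightarrow> nat" where
  "bmu x = Max {n. bit x n}"

definition blambda :: "nat \<Rightarrow> nat" where
  "blambda x = Min {n. bit x n}"

definition Bblock :: "nat \<Rightarrow> nat set" where
  "Bblock n = {x. 0 < x \<and> bmu x = n}"

definition weak_apart :: "nat set \<Rightarrow> bool" where
  "weak_apart A \<longleftrightarrow>
     (\<forall>m. finite (Bblock m \<inter> A) \<and> card (Bblock m \<inter> A) \<le> 1) \<and>
     (\<forall>l. finite {x\<in>A. blambda x = l} \<and> card {x\<in>A. blambda x = l} \<le> 2)"

definition FS2 :: "nat set \<Rightarrow> nat set" where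
  "FS2 A = {\<Sum>F | F. F \<subseteq> A \<and> F \<noteq> {} \<and> finite F \<and> card F \<le> 2}"

definition monochromatic :: "(nat \<Rightarrow> 'c) \<Rightarrow> nat set \<Rightarrow> bool" where
  "monochromatic c S \<longleftrightarrow> (\<exists>col. \<forall>s\<in>S. c s = col)"

end

theory Submission imports Defs begin

definition rf :: "nat \<Rightarrow> (nat list \<Rightarrow> nat) \<Rightarrow> bool" where
  "rf n P \<longleftrightarrow> (\<exists>f. recfn n f \<and> (\<forall>xs. length xs = n \<longrightarrow> f xs = P xs))"

lemma rf_cong: "rf n f \<Longrightarrow> (\<And>xs. length xs = n \<Longrightarrow> f xs = g xs) \<Longrightarrow> rf n g"
  unfolding rf_def by metis

lemma rf_zero: "rf n (\<lambda>_. 0)"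
  unfolding rf_def using recfn.zero by blast

lemma rf_succ: "rf 1 (\<lambda>xs. Suc (xs!0))"
proof -
  have "recfn 1 (\<lambda>xs. Suc (hd xs))" by (rule recfn.succ)
  moreover have "\<forall>xs. length xs = 1 \<longrightarrow> Suc (hd xs) = Suc (xs!0)"
    by (auto simp: length_Suc_conv)
  ultimately show ?thesis unfolding rf_def by blast
qed

lemma rf_proj: "i < n \<Longrightarrow> rf n (\<lambda>xs. xs!i)"
  unfolding rf_def using recfn.proj by blast

lemma rf_comp1: assumes "rf 1 f" "rf n g" shows "rf n (\<lambda>xs. f [g xs])"
proof -
  obtain F where F: "recfn 1 F" "\<forall>xs. length xs = 1 \<longrightarrow> F xs = f xs" using assms(1) rf_def by auto
  obtain G where G: "recfn n G" "\<forall>xs. length xs = n \<longrightarrow> G xs = g xs" using assms(2) rf_def by auto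
  have "recfn n (\<lambda>xs. F (map (\<lambda>g. g xs) [G]))"
    by (rule recfn.comp[OF F(1)]) (use G in auto)
  then show ?thesis unfolding rf_def using F G by (intro exI[of _ "\<lambda>xs. F (map (\<lambda>g. g xs) [G])"]) auto
qed

lemma rf_comp2: assumes "rf 2 f" "rf n g1" "rf n g2" shows "rf n (\<lambda>xs. f [g1 xs, g2 xs])"
proof -
  obtain F where F: "recfn 2 F" "\<forall>xs. length xs = 2 \<longrightarrow> F xs = f xs" using assms(1) rf_def by auto
  obtain G1 where G1: "recfn n G1" "\<forall>xs. length xs = n \<longrightarrow> G1 xs = g1 xs" using assms(2) rf_def by auto
  obtain G2 where G2: "recfn n G2" "\<forall>xs. length xs = n \<longrightarrow> G2 xs = g2 xs" using assms(3) rf_def by auto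
  have "recfn n (\<lambda>xs. F (map (\<lambda>g. g xs) [G1, G2]))"
    by (rule recfn.comp[OF F(1)]) (use G1 G2 in auto)
  then show ?thesis unfolding rf_def using F G1 G2
    by (intro exI[of _ "\<lambda>xs. F (map (\<lambda>g. g xs) [G1, G2])"]) auto
qed

lemma rf_prim: assumes "rf n g" "rf (Suc (Suc n)) h" shows "rf (Suc n) (PR g h)"
proof -
  obtain G where G: "recfn n G" "\<forall>xs. length xs = n \<longrightarrow> G xs = g xs" using assms(1) rf_def by auto
  obtain H where H: "recfn (Suc (Suc n)) H" "\<forall>xs. length xs = Suc (Suc n) \<longrightarrow> H xs = h xs"
    using assms(2) rf_def by auto
  have eq: "PR G H (y # ys) = PR g h (y # ys)" if "length ys = n" for y ys
    by (induction y) (use G H that in auto)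
  show ?thesis unfolding rf_def
  proof (intro exI conjI allI impI)
    show "recfn (Suc n) (PR G H)" by (rule recfn.prim[OF G(1) H(1)])
    fix xs :: "nat list" assume "length xs = Suc n"
    then obtain y ys where "xs = y # ys" "length ys = n" by (auto simp: length_Suc_conv)
    then show "PR G H xs = PR g h xs" using eq by simp
  qed
qed

lemma rf_mu: assumes "rf (Suc n) g" "\<And>xs. length xs = n \<Longrightarrow> \<exists>y. g (y#xs) = 0"
  shows "rf n (\<lambda>xs. LEAST y. g (y#xs) = 0)"
proof -
  obtain G where G: "recfn (Suc n) G" "\<forall>xs. length xs = Suc n \<longrightarrow> G xs = g xs" using assms(1) rf_def by auto
  have ex: "\<forall>xs. length xs = n \<longrightarrow> (\<exists>y. G (y # xs) = 0)" using assms(2) G(2) by simp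
  show ?thesis unfolding rf_def
    by (rule exI[of _ "\<lambda>xs. LEAST y. G (y#xs) = 0"]) (use recfn.mu[OF G(1) ex] G(2) in auto)
qed

lemma rf_prim1: "rf 0 g \<Longrightarrow> rf 2 h \<Longrightarrow> rf 1 (PR g h)"
  using rf_prim[of 0 g h] by (simp add: numeral_2_eq_2)
lemma rf_prim2: "rf 1 g \<Longrightarrow> rf 3 h \<Longrightarrow> rf 2 (PR g h)"
  using rf_prim[of 1 g h] by (simp add: numeral_2_eq_2 numeral_3_eq_3)

lemma len1: "length xs = 1 \<Longrightarrow> xs = [xs!0]"
  by (cases xs) auto
lemma len2: "length xs = 2 \<Longrightarrow> xs = [xs!0, xs!1]"
  by (cases xs; cases "tl xs") auto

lemma rf_one0: "rf 0 (\<lambda>_. 1)"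
  by (rule rf_cong[OF rf_comp1[OF rf_succ rf_zero]]) simp

lemma rf_nsg: "rf 1 (\<lambda>xs. if xs!0 = 0 then 1 else 0)"
proof -
  have "rf 1 (PR (\<lambda>_. 1) (\<lambda>_. 0))" by (rule rf_prim1[OF rf_one0 rf_zero])
  then show ?thesis
  proof (rule rf_cong)
    fix xs :: "nat list" assume "length xs = 1"
    then have "xs = [xs!0]" by (rule len1)
    then show "PR (\<lambda>_. 1) (\<lambda>_. 0) xs = (if xs!0 = 0 then 1 else 0)"
      by (cases "xs!0") (metis PR.simps(2), metis PR.simps(3) nat.distinct(1))
  qed
qed

lemma PR_par: "PR (\<lambda>_. 0) (\<lambda>xs. if xs!0 = 0 then 1 else 0) [y] = y mod 2"
  by (induction y) (auto simp: mod_Suc)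

lemma rf_par: "rf 1 (\<lambda>xs. xs!0 mod 2)"
proof -
  have "rf 2 (\<lambda>xs. (\<lambda>xs. if xs!0 = 0 then 1 else 0) [xs!0])"
    by (rule rf_comp1[OF rf_nsg rf_proj]) simp
  then have "rf 2 (\<lambda>xs. if xs!0 = 0 then 1 else 0)" by (rule rf_cong) simp
  then have "rf 1 (PR (\<lambda>_. 0) (\<lambda>xs. if xs!0 = 0 then 1 else 0))" by (rule rf_prim1[OF rf_zero])
  then show ?thesis by (rule rf_cong) (metis len1 PR_par)
qed

lemma PR_add: "PR (\<lambda>xs. xs!0) (\<lambda>xs. Suc (xs!0)) [y, x] = y + x"
  by (induction y) auto

lemma rf_add: "rf 2 (\<lambda>xs. xs!0 + xs!1)"
proof -
  have "rf 3 (\<lambda>xs. (\<lambda>xs. Suc (xs!0)) [xs!0])"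
    by (rule rf_comp1[OF rf_succ rf_proj]) simp
  then have h3: "rf 3 (\<lambda>xs. Suc (xs!0))" by (rule rf_cong) simp
  have "rf 2 (PR (\<lambda>xs. xs!0) (\<lambda>xs. Suc (xs!0)))" using rf_prim2[OF rf_proj[of 0 1] h3] by simp
  then show ?thesis by (rule rf_cong) (metis len2 PR_add)
qed

lemma PR_half: "PR (\<lambda>_. 0) (\<lambda>xs. xs!0 + xs!1 mod 2) [y] = y div 2"
  by (induction y) (auto simp: div2_Suc_Suc, presburger)

lemma rf_half: "rf 1 (\<lambda>xs. xs!0 div 2)"
proof -
  have "rf 2 (\<lambda>xs. (\<lambda>xs. xs!0 + xs!1) [xs!0, (\<lambda>xs. xs!0 mod 2) [xs!1]])"
    by (rule rf_comp2[OF rf_add rf_proj rf_comp1[OF rf_par rf_proj]]) simp_all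
  then have "rf 2 (\<lambda>xs. xs!0 + xs!1 mod 2)" by (rule rf_cong) simp
  then have "rf 1 (PR (\<lambda>_. 0) (\<lambda>xs. xs!0 + xs!1 mod 2))" by (rule rf_prim1[OF rf_zero])
  then show ?thesis by (rule rf_cong) (metis len1 PR_half)
qed

lemma PR_shift: "PR (\<lambda>xs. xs!0) (\<lambda>xs. xs!0 div 2) [k, x] = x div 2^k"
  by (induction k) (simp_all, metis div_mult2_eq mult.commute)

lemma rf_shift: "rf 2 (\<lambda>xs. xs!1 div 2^(xs!0))"
proof -
  have "rf 3 (\<lambda>xs. (\<lambda>xs. xs!0 div 2) [xs!0])"
    by (rule rf_comp1[OF rf_half rf_proj]) simp
  then have h3: "rf 3 (\<lambda>xs. xs!0 div 2)" by (rule rf_cong) simp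
  have "rf 2 (PR (\<lambda>xs. xs!0) (\<lambda>xs. xs!0 div 2))" using rf_prim2[OF rf_proj[of 0 1] h3] by simp
  then show ?thesis by (rule rf_cong) (metis len2 PR_shift)
qed

definition mup :: "nat \<Rightarrow> nat" where
  "mup x = (LEAST k. x div 2^(Suc k) = 0)"
definition lamp :: "nat \<Rightarrow> nat" where
  "lamp x = (LEAST k. x = 0 \<or> odd (x div 2^k))"
definition cz :: "nat \<Rightarrow> bool \<times> bool" where
  "cz x = (even (mup x), even (lamp x))"

lemma div_pow_self: "(x::nat) div 2^(Suc x) = 0"
proof -
  have "x < 2^x" by (rule less_exp)
  also have "... < 2^Suc x" by simp
  finally show ?thesis by simp
qed

lemma rf_mup: "rf 1 (\<lambda>xs. mup (xs!0))"
proof -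
  have "rf 2 (\<lambda>xs. (\<lambda>xs. xs!1 div 2^(xs!0)) [(\<lambda>xs. Suc (xs!0)) [xs!0], xs!1])"
    by (rule rf_comp2[OF rf_shift rf_comp1[OF rf_succ rf_proj] rf_proj]) simp_all
  then have "rf 2 (\<lambda>xs. (xs!1) div 2^(Suc (xs!0)))" by (rule rf_cong) simp
  then have "rf (Suc 1) (\<lambda>xs. (xs!1) div 2^(Suc (xs!0)))" unfolding Suc_1 .
  then have "rf 1 (\<lambda>xs. LEAST y. (y#xs)!1 div 2^(Suc ((y#xs)!0)) = 0)"
    by (rule rf_mu) (use div_pow_self in auto)
  then show ?thesis by (rule rf_cong) (simp add: mup_def)
qed

lemma lamp_ex: "\<exists>k. (x::nat) = 0 \<or> odd (x div 2^k)"
proof (cases "x = 0")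
  case False
  have "\<exists>k. bit x k"
  proof (rule ccontr)
    assume "\<not> (\<exists>k. bit x k)"
    then have "x = 0" by (intro bit_eqI) auto
    with False show False by simp
  qed
  then show ?thesis by (auto simp: bit_iff_odd)
qed simp

lemma rf_lamp: "rf 1 (\<lambda>xs. lamp (xs!0))"
proof -
  have "rf 2 (\<lambda>xs. (\<lambda>xs. if xs!0 = 0 then 1 else 0) [(\<lambda>xs. xs!0 + xs!1)
      [(\<lambda>xs. if xs!0 = 0 then 1 else 0) [xs!1], (\<lambda>xs. xs!0 mod 2) [(\<lambda>xs. xs!1 div 2^(xs!0)) [xs!0, xs!1]]]])"
    by (rule rf_comp1[OF rf_nsg rf_comp2[OF rf_add rf_comp1[OF rf_nsg rf_proj]
           rf_comp1[OF rf_par rf_comp2[OF rf_shift rf_proj rf_proj]]]]) simp_all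
  then have "rf 2 (\<lambda>xs. if (if xs!1 = 0 then 1 else 0) + (xs!1 div 2^(xs!0)) mod 2 = 0 then 1 else (0::nat))"
    by (rule rf_cong) simp
  then have "rf (Suc 1) (\<lambda>xs. if (if xs!1 = 0 then 1 else 0) + (xs!1 div 2^(xs!0)) mod 2 = 0 then 1 else (0::nat))"
    unfolding Suc_1 .
  then have "rf 1 (\<lambda>xs. LEAST y. (if (if (y#xs)!1 = 0 then 1 else 0) + ((y#xs)!1 div 2^((y#xs)!0)) mod 2 = 0 then 1 else (0::nat)) = 0)"
  proof (rule rf_mu[where g="\<lambda>xs. if (if xs!1 = 0 then 1 else 0) + (xs!1 div 2^(xs!0)) mod 2 = 0 then 1 else 0"])
    fix xs :: "nat list" assume "length xs = 1"
    obtain k where "xs!0 = 0 \<or> odd (xs!0 div 2^k)" using lamp_ex by blast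
    then show "\<exists>y. (if (if (y#xs)!1 = 0 then 1 else 0) + ((y#xs)!1 div 2^((y#xs)!0)) mod 2 = 0 then 1 else (0::nat)) = 0"
      by (intro exI[of _ k]) (auto simp: odd_iff_mod_2_eq_one)
  qed
  then show ?thesis
  proof (rule rf_cong)
    fix xs :: "nat list" assume "length xs = 1"
    have "\<And>y. ((if (if (y#xs)!1 = 0 then 1 else 0) + ((y#xs)!1 div 2^((y#xs)!0)) mod 2 = 0 then 1 else (0::nat)) = (0::nat))
       = (xs!0 = 0 \<or> odd (xs!0 div 2^y))"
      by (auto simp: odd_iff_mod_2_eq_one)
    then show "(LEAST y. (if (if (y#xs)!1 = 0 then 1 else 0) + ((y#xs)!1 div 2^((y#xs)!0)) mod 2 = 0 then 1 else (0::nat)) = 0) = lamp (xs!0)"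
      by (simp add: lamp_def)
  qed
qed

lemma rf_cz: "rf 1 (\<lambda>xs. code2 (cz (xs!0)))"
proof -
  have e1: "rf 1 (\<lambda>xs. (\<lambda>xs. if xs!0 = 0 then 1 else 0) [(\<lambda>xs. xs!0 mod 2) [(\<lambda>xs. mup (xs!0)) [xs!0]]])"
    by (rule rf_comp1[OF rf_nsg rf_comp1[OF rf_par rf_comp1[OF rf_mup rf_proj]]]) simp
  have e2: "rf 1 (\<lambda>xs. (\<lambda>xs. if xs!0 = 0 then 1 else 0) [(\<lambda>xs. xs!0 mod 2) [(\<lambda>xs. lamp (xs!0)) [xs!0]]])"
    by (rule rf_comp1[OF rf_nsg rf_comp1[OF rf_par rf_comp1[OF rf_lamp rf_proj]]]) simp
  have "rf 1 (\<lambda>xs. (\<lambda>xs. xs!0 + xs!1) [(\<lambda>xs. xs!0 + xs!1) [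
     (\<lambda>xs. (\<lambda>xs. if xs!0 = 0 then 1 else 0) [(\<lambda>xs. xs!0 mod 2) [(\<lambda>xs. mup (xs!0)) [xs!0]]]) xs,
     (\<lambda>xs. (\<lambda>xs. if xs!0 = 0 then 1 else 0) [(\<lambda>xs. xs!0 mod 2) [(\<lambda>xs. mup (xs!0)) [xs!0]]]) xs],
     (\<lambda>xs. (\<lambda>xs. if xs!0 = 0 then 1 else 0) [(\<lambda>xs. xs!0 mod 2) [(\<lambda>xs. lamp (xs!0)) [xs!0]]]) xs])"
    by (rule rf_comp2[OF rf_add rf_comp2[OF rf_add e1 e1] e2])
  then show ?thesis by (rule rf_cong) (auto simp: code2_def cz_def even_iff_mod_2_eq_zero)
qed

lemma rec_cz: "recursive_coloring cz"
proof -
  obtain f where f: "recfn 1 f" "\<forall>xs. length xs = 1 \<longrightarrow> f xs = code2 (cz (xs!0))"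
    using rf_cz rf_def by auto
  show ?thesis unfolding recursive_coloring_def computable_def
    using f by (intro exI[of _ f]) auto
qed

lemma mup_eq: assumes "2^n \<le> x" "x < 2^Suc n" shows "mup x = n"
  unfolding mup_def
proof (rule Least_equality)
  show "x div 2 ^ Suc n = 0" using assms by simp
  fix k assume "x div 2 ^ Suc k = 0"
  then have "x < 2^Suc k" by (simp add: div_eq_0_iff)
  with assms(1) have h: "(2::nat)^n < 2^Suc k" by linarith
  have "n < Suc k" by (rule power_less_imp_less_exp[OF _ h]) simp
  then show "n \<le> k" by simp
qed

lemma mup_bounds: assumes "0 < x" shows "2^(mup x) \<le> x \<and> x < 2^Suc (mup x)"
proof -
  have ex: "x div 2^Suc x = 0" by (rule div_pow_self)
  have a: "x div 2 ^ Suc (mup x) = 0" unfolding mup_def by (rule LeastI[of _ x]) (rule ex)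
  have b: "2^(mup x) \<le> x"
  proof (cases "mup x")
    case 0 then show ?thesis using assms by simp
  next
    case (Suc m)
    have "\<not> x div 2 ^ Suc m = 0"
    proof
      assume "x div 2 ^ Suc m = 0"
      then have "mup x \<le> m" unfolding mup_def by (rule Least_le)
      with Suc show False by simp
    qed
    then show ?thesis using Suc by (simp add: div_eq_0_iff)
  qed
  from a b show ?thesis by (simp add: div_eq_0_iff)
qed

lemma bit_le: "bit (x::nat) n \<Longrightarrow> 2^n \<le> x"
  by (metis bit_iff_odd div_less even_zero not_le)

lemma fin_bits: "finite {n. bit (x::nat) n}"
proof (rule finite_subset)
  show "{n. bit x n} \<subseteq> {..x}"
  proof
    fix n assume "n \<in> {n. bit x n}"
    then have "2^n \<le> x" using bit_le by auto
    moreover have "n < 2^n" by (rule less_exp)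
    ultimately have "n < x" by linarith
    then show "n \<in> {..x}" by simp
  qed
qed simp

lemma bmu_mup: assumes "0 < x" shows "bmu x = mup x"
proof -
  let ?n = "mup x"
  have bd: "2^?n \<le> x" "x < 2^Suc ?n" using mup_bounds[OF assms] by auto
  have "x div 2^?n = 1"
  proof -
    have "x div 2^?n > 0" using bd by (simp add: div_greater_zero_iff)
    moreover have "x div 2^?n < 2" using bd by (simp add: div_less_iff_less_mult mult.commute)
    ultimately show ?thesis by simp
  qed
  then have "bit x ?n" by (simp add: bit_iff_odd)
  moreover have "m \<le> ?n" if "bit x m" for m
  proof (rule ccontr)
    assume "\<not> m \<le> ?n"
    then have "(2::nat)^Suc ?n \<le> 2^m" by (intro power_increasing) auto
    with bit_le[OF that] bd show False by simp
  qed
  ultimately show ?thesis unfolding bmu_def by (intro Max_eqI fin_bits) auto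
qed

lemma pow_mult_div_lt: assumes "k < l" shows "even ((2::nat)^l * a div 2^k)"
proof -
  have "(2::nat)^l = 2^k * 2^(l-k)" using assms by (simp add: power_add[symmetric])
  then have "(2::nat)^l * a div 2^k = 2^(l-k) * a" by simp
  with assms show ?thesis by simp
qed

lemma lamp_eq: assumes "odd a" shows "lamp (2^l * a) = l"
  unfolding lamp_def
proof (rule Least_equality)
  show "2^l * a = 0 \<or> odd (2^l * a div 2^l)" using assms by simp
  fix k assume "2^l * a = 0 \<or> odd (2^l * a div 2^k)"
  then have "odd (2^l * a div 2^k)" using assms by auto
  then show "l \<le> k" using pow_mult_div_lt[of k l a] by (metis not_le)
qed

lemma ex_odd_decomp: "0 < (x::nat) \<Longrightarrow> \<exists>l a. x = 2^l * a \<and> odd a"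
proof (induction x rule: less_induct)
  case (less x)
  show ?case
  proof (cases "odd x")
    case True then show ?thesis by (intro exI[of _ 0] exI[of _ x]) auto
  next
    case False
    then obtain y where y: "x = 2 * y" by blast
    with less.prems have "y < x" "0 < y" by auto
    then obtain l a where "y = 2^l * a" "odd a" using less.IH by blast
    then show ?thesis using y by (intro exI[of _ "Suc l"] exI[of _ a]) auto
  qed
qed

lemma blambda_lamp: assumes "0 < x" shows "blambda x = lamp x"
proof -
  obtain l a where x: "x = 2^l * a" "odd a" using ex_odd_decomp[OF assms] by blast
  have "Min {n. bit x n} = l"
  proof (rule Min_eqI[OF fin_bits])
    show "l \<in> {n. bit x n}" using x by (simp add: bit_iff_odd)
    fix y assume "y \<in> {n. bit x n}"
    then have "odd (2^l * a div 2^y)" using x by (simp add: bit_iff_odd)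
    then show "l \<le> y" using pow_mult_div_lt[of y l a] by (metis not_le)
  qed
  then show ?thesis unfolding blambda_def using lamp_eq[OF x(2)] x(1) by simp
qed

lemma FS2_single: "x \<in> A \<Longrightarrow> x \<in> FS2 A"
  unfolding FS2_def by (intro CollectI exI[of _ "{x}"]) auto

lemma FS2_pair: "x \<in> A \<Longrightarrow> y \<in> A \<Longrightarrow> x \<noteq> y \<Longrightarrow> x + y \<in> FS2 A"
  unfolding FS2_def by (intro CollectI exI[of _ "{x,y}"]) (auto simp: card_insert_if)

lemma two_el: "\<not> (finite S \<and> card S \<le> 1) \<Longrightarrow> \<exists>x y. x \<in> S \<and> y \<in> S \<and> x \<noteq> y"
proof (rule ccontr)
  assume a: "\<not> (finite S \<and> card S \<le> 1)" "\<not> (\<exists>x y. x \<in> S \<and> y \<in> S \<and> x \<noteq> y)"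
  show False
  proof (cases "S = {}")
    case True with a show False by simp
  next
    case False
    then obtain x where "x \<in> S" by blast
    with a(2) have "S = {x}" by blast
    with a(1) show False by simp
  qed
qed

lemma three_el: "\<not> (finite S \<and> card S \<le> 2) \<Longrightarrow>
   \<exists>x y z. x \<in> S \<and> y \<in> S \<and> z \<in> S \<and> x \<noteq> y \<and> x \<noteq> z \<and> y \<noteq> z"
proof (rule ccontr)
  assume a: "\<not> (finite S \<and> card S \<le> 2)"
    "\<not> (\<exists>x y z. x \<in> S \<and> y \<in> S \<and> z \<in> S \<and> x \<noteq> y \<and> x \<noteq> z \<and> y \<noteq> z)"
  have "\<not> (finite S \<and> card S \<le> 1)"
  proof
    assume "finite S \<and> card S \<le> 1" with a(1) show False by simp
  qed
  then obtain x y where xy: "x \<in> S" "y \<in> S" "x \<noteq> y" using two_el by blast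
  with a(2) have "S \<subseteq> {x, y}" by blast
  then have "finite S" "card S \<le> card {x,y}" by (auto intro: finite_subset card_mono)
  moreover have "card {x,y} \<le> 2" by (simp add: card_insert_if)
  ultimately show False using a(1) by simp
qed

lemma pair_sum: "odd (a::nat) \<Longrightarrow> odd b \<Longrightarrow> a mod 4 = b mod 4 \<Longrightarrow> \<exists>d. a + b = 2 * d \<and> odd d"
  by presburger

lemma bad: assumes "x \<in> A" "y \<in> A" "x \<noteq> y" "cz x \<noteq> cz (x + y)"
  shows "\<not> monochromatic cz (FS2 A)"
  unfolding monochromatic_def using FS2_single[OF assms(1)] FS2_pair[OF assms(1-3)] assms(4) by metis

lemma mu_case: assumes "0 < x" "0 < y" "bmu x = m" "bmu y = m" shows "cz x \<noteq> cz (x + y)"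
proof -
  have "mup x = m" "mup y = m" using assms bmu_mup by auto
  then have "2^m \<le> x" "x < 2^Suc m" "2^m \<le> y" "y < 2^Suc m"
    using mup_bounds[OF assms(1)] mup_bounds[OF assms(2)] by auto
  then have "mup (x + y) = Suc m" by (intro mup_eq) auto
  with \<open>mup x = m\<close> show ?thesis by (simp add: cz_def)
qed

lemma lam_case: assumes "odd a" "odd b" "a mod 4 = b mod 4"
  shows "cz (2^l * a) \<noteq> cz (2^l * a + 2^l * b)"
proof -
  obtain d where d: "a + b = 2 * d" "odd d" using pair_sum[OF assms] by blast
  have "2^l * a + 2^l * b = 2^l * (a + b)" by (simp add: distrib_left)
  also have "... = 2^Suc l * d" using d(1) by simp
  finally have "2^l * a + 2^l * b = 2^Suc l * d" .
  then have "lamp (2^l * a + 2^l * b) = Suc l" using lamp_eq[OF d(2), of "Suc l"] by metis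
  moreover have "lamp (2^l * a) = l" by (rule lamp_eq[OF assms(1)])
  ultimately show ?thesis by (simp add: cz_def)
qed

lemma decomp_l: assumes "0 < x" "blambda x = l" shows "\<exists>a. x = 2^l * a \<and> odd a"
proof -
  obtain l' a where x: "x = 2^l' * a" "odd a" using ex_odd_decomp[OF assms(1)] by blast
  have "l' = l" using blambda_lamp[OF assms(1)] lamp_eq[OF x(2)] x(1) assms(2) by simp
  with x show ?thesis by blast
qed

theorem lemma4p1:
  shows "\<exists>c0 :: nat \<Rightarrow> bool \<times> bool. recursive_coloring c0 \<and>
           (\<forall>A. A \<subseteq> {0<..} \<and> infinite A \<and> \<not> weak_apart A
                \<longrightarrow> \<not> monochromatic c0 (FS2 A))"
proof (intro exI[of _ cz] conjI allI impI)
  show "recursive_coloring cz" by (rule rec_cz)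
  fix A assume A: "A \<subseteq> {0<..} \<and> infinite A \<and> \<not> weak_apart A"
  then have pos: "\<And>x. x \<in> A \<Longrightarrow> 0 < x" by auto
  from A consider m where "\<not> (finite (Bblock m \<inter> A) \<and> card (Bblock m \<inter> A) \<le> 1)"
    | l where "\<not> (finite {x\<in>A. blambda x = l} \<and> card {x\<in>A. blambda x = l} \<le> 2)"
    unfolding weak_apart_def by blast
  then show "\<not> monochromatic cz (FS2 A)"
  proof cases
    case (1 m)
    then obtain x y where xy: "x \<in> Bblock m \<inter> A" "y \<in> Bblock m \<inter> A" "x \<noteq> y"
      using two_el[OF 1] by blast
    have "cz x \<noteq> cz (x + y)" by (rule mu_case) (use xy in \<open>auto simp: Bblock_def\<close>)
    then show ?thesis by (intro bad[of x A y]) (use xy in auto)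
  next
    case (2 l)
    then obtain x y z where xyz: "x \<in> A" "y \<in> A" "z \<in> A" "blambda x = l" "blambda y = l" "blambda z = l"
      "x \<noteq> y" "x \<noteq> z" "y \<noteq> z"
      using three_el[OF 2] by blast
    obtain a where a: "x = 2^l * a" "odd a" using decomp_l pos xyz by blast
    obtain b where b: "y = 2^l * b" "odd b" using decomp_l pos xyz by blast
    obtain c where c: "z = 2^l * c" "odd c" using decomp_l pos xyz by blast
    have m4: "n mod 4 = 1 \<or> n mod 4 = 3" if "odd (n::nat)" for n using that by presburger
    have "a mod 4 = b mod 4 \<or> a mod 4 = c mod 4 \<or> b mod 4 = c mod 4"
      using m4[OF a(2)] m4[OF b(2)] m4[OF c(2)] by linarith
    then show ?thesis
    proof (elim disjE)
      assume h: "a mod 4 = b mod 4"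
      show ?thesis using lam_case[OF a(2) b(2) h, of l] a(1) b(1) by (intro bad[OF xyz(1,2,7)]) simp
    next
      assume h: "a mod 4 = c mod 4"
      show ?thesis using lam_case[OF a(2) c(2) h, of l] a(1) c(1) by (intro bad[OF xyz(1,3,8)]) simp
    next
      assume h: "b mod 4 = c mod 4"
      show ?thesis using lam_case[OF b(2) c(2) h, of l] b(1) c(1) by (intro bad[OF xyz(2,3,9)]) simp
    qed
  qed
qed

end
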